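(* Let $n\ge 3$. Every instance of the $n^2$-puzzle is solvable: for the $n\times n$ grid graph $G=(V,E)$ with a set $R$ of $n^2$ robots and any bijections $x_I,x_G:R\to V$, there exists a collision-free set of feasible paths taking each robot $r$ from $x_I(r)$ to $x_G(r)$.
   Context: Let $\mathbb Z^+=\mathbb N\cup\{0\}$. A path for robot $r_i$ is a map $p_i:\mathbb Z^+\to V$; it is feasible if $p_i(0)=x_I(r_i)$, there is a smallest $k_i^{\min}$ with $p_i(k)=x_G(r_i)$ for all $k\ge k_i^{\min}$, and for $0\le k<k_i^{\min}$ either $(p_i(k),p_i(k+1))\in E$ or $p_i(k)=p_i(k+1)$. Two paths $p_i,p_j$ ($i\ne j$) collide if for some $k$, $p_i(k)=p_j(k)$ or $(p_i(k),p_i(k+1))=(p_j(k+1),p_j(k))$. Multiple robots may move in the same time step. *)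

theory Defs
  imports Main
begin

definition grid_V :: "nat \<Rightarrow> (nat \<times> nat) set" where
  "grid_V n = {0..<n} \<times> {0..<n}"

text \<open>Directed edge set of the (undirected) grid graph: both orientations of each
  edge are included; two cells are adjacent iff they differ by 1 in exactly one coordinate.\<close>
definition grid_E :: "nat \<Rightarrow> ((nat \<times> nat) \<times> (nat \<times> nat)) set" where
  "grid_E n = {((a,b),(c,d)). (a,b) \<in> grid_V n \<and> (c,d) \<in> grid_V n \<and>
      ((a = c \<and> (b = d + 1 \<or> d = b + 1)) \<or> (b = d \<and> (a = c + 1 \<or> c = a + 1)))}"

definition feasible_path :: "('v \<times> 'v) set \<Rightarrow> 'v \<Rightarrow> 'v \<Rightarrow> (nat \<Rightarrow> 'v) \<Rightarrow> bool" where
  "feasible_path E s g p \<longleftrightarrow>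
     p 0 = s \<and>
     (\<exists>kmin. (\<forall>k\<ge>kmin. p k = g) \<and>
             (\<forall>k<kmin. (p k, p (Suc k)) \<in> E \<or> p k = p (Suc k)))"

definition collide :: "(nat \<Rightarrow> 'v) \<Rightarrow> (nat \<Rightarrow> 'v) \<Rightarrow> bool" where
  "collide p q \<longleftrightarrow> (\<exists>k. p k = q k \<or> (p k, p (Suc k)) = (q (Suc k), q k))"

end

theory Submission
  imports Defs "HOL-Combinatorics.Permutations"
begin

fun rot :: "nat \<times> nat \<Rightarrow> bool \<Rightarrow> nat \<times> nat \<Rightarrow> nat \<times> nat" where
  "rot (x,y) d v = (if d then
      (if v = (x,y) then (x+1,y) else if v = (x+1,y) then (x+1,y+1)
       else if v = (x+1,y+1) then (x,y+1) else if v = (x,y+1) then (x,y) else v)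
    else
      (if v = (x,y) then (x,y+1) else if v = (x,y+1) then (x+1,y+1)
       else if v = (x+1,y+1) then (x+1,y) else if v = (x+1,y) then (x,y) else v))"

fun applyW :: "((nat \<times> nat) \<times> bool) list \<Rightarrow> nat \<times> nat \<Rightarrow> nat \<times> nat" where
  "applyW [] = id"
| "applyW ((c,d)#ws) = rot c d \<circ> applyW ws"

fun padd :: "nat \<times> nat \<Rightarrow> nat \<times> nat \<Rightarrow> nat \<times> nat" where
  "padd (a,b) (x,y) = (a+x, b+y)"

definition shiftW :: "nat \<times> nat \<Rightarrow> ((nat \<times> nat) \<times> bool) list \<Rightarrow> ((nat \<times> nat) \<times> bool) list" where
  "shiftW t ws = map (\<lambda>(c,d). (padd c t, d)) ws"

fun sq :: "nat \<times> nat \<Rightarrow> (nat \<times> nat) set" where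
  "sq (x,y) = {(x,y),(x+1,y),(x+1,y+1),(x,y+1)}"

lemma rot_shift: "rot (padd c t) d (padd v t) = padd (rot c d v) t"
  by (cases c; cases t; cases v; auto)

lemma applyW_shift: "applyW (shiftW t ws) (padd v t) = padd (applyW ws v) t"
  by (induction ws arbitrary: v) (auto simp: shiftW_def rot_shift)

lemma rot_fix: "v \<notin> sq c \<Longrightarrow> rot c d v = v"
  by (cases c; cases v; auto)

lemma applyW_fix: "(\<forall>(c,d)\<in>set ws. v \<notin> sq c) \<Longrightarrow> applyW ws v = v"
  by (induction ws) (auto simp: rot_fix)

definition valid :: "nat \<Rightarrow> (nat \<times> nat \<Rightarrow> nat \<times> nat) \<Rightarrow> bool" where
  "valid n \<sigma> \<longleftrightarrow> inj \<sigma> \<and> (\<forall>v. \<sigma> v = v \<or> (v, \<sigma> v) \<in> grid_E n) \<and>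
     (\<forall>v. \<sigma> v \<noteq> v \<longrightarrow> \<sigma> (\<sigma> v) \<noteq> v)"

lemma rot_inv: "rot c (\<not> d) (rot c d v) = v"
  by (cases c; cases v; cases d; auto)

lemma rot_valid:
  assumes "fst c + 1 < n" "snd c + 1 < n"
  shows "valid n (rot c d)"
proof -
  obtain x y where c: "c = (x,y)" by (cases c)
  have "inj (rot c d)"
    by (rule inj_on_inverseI[where g = "rot c (\<not> d)"]) (simp add: rot_inv)
  moreover have "rot c d v = v \<or> (v, rot c d v) \<in> grid_E n" for v
  proof -
    have g: "x < n" "y < n" "x+1 < n" "y+1<n" using assms c by auto
    show ?thesis unfolding c rot.simps grid_E_def grid_V_def
      using g by (simp split: if_split)
  qed
  moreover have "rot c d v \<noteq> v \<longrightarrow> rot c d (rot c d v) \<noteq> v" for v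
    unfolding c by (cases v; cases d; simp)
  ultimately show ?thesis by (simp add: valid_def)
qed
inductive achievable :: "nat \<Rightarrow> (nat \<times> nat \<Rightarrow> nat \<times> nat) \<Rightarrow> bool" for n where
  ach_id: "achievable n id"
| ach_step: "valid n \<sigma> \<Longrightarrow> achievable n \<pi> \<Longrightarrow> achievable n (\<sigma> \<circ> \<pi>)"

lemma achievable_comp: "achievable n b \<Longrightarrow> achievable n a \<Longrightarrow> achievable n (b \<circ> a)"
  by (induction rule: achievable.induct) (auto simp: comp_assoc intro: achievable.intros)

lemma achievable_applyW:
  "(\<forall>(c,d)\<in>set ws. fst c + 1 < n \<and> snd c + 1 < n) \<Longrightarrow> achievable n (applyW ws)"
  by (induction ws) (auto intro!: achievable.intros rot_valid)

lemma padd_inj: "padd x t = padd y t \<longleftrightarrow> x = y"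
  by (cases x; cases y; cases t; auto)

lemma sq_in_block:
  assumes "a \<le> 1" "b \<le> 1" "z \<in> sq (padd (a,b) t)"
  shows "\<exists>i<3. \<exists>j<3. z = padd (i,j) t"
proof -
  obtain x y where t: "t = (x,y)" by (cases t)
  from assms(3) have "z = padd (a,b) t \<or> z = padd (a+1,b) t \<or> z = padd (a+1,b+1) t \<or> z = padd (a,b+1) t"
    by (auto simp: t)
  then show ?thesis using assms(1,2)
    apply (elim disjE)
       apply (rule exI[of _ a], simp, rule exI[of _ b], simp)
      apply (rule exI[of _ "a+1"], simp, rule exI[of _ b], simp)
     apply (rule exI[of _ "a+1"], simp, rule exI[of _ "b+1"], simp)
    apply (rule exI[of _ a], simp, rule exI[of _ "b+1"], simp)
    done
qed
lemma in_blk: "fst u < 3 \<Longrightarrow> snd u < 3 \<Longrightarrow> \<exists>i<3. \<exists>j<3. padd u t = padd (i,j) t"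
  apply (rule exI[where x="fst u"])
  apply (rule conjI, assumption)
  apply (rule exI[where x="snd u"])
  apply (rule conjI, assumption)
  apply simp
  done

lemma transpose_padd:
  "padd (Transposition.transpose u v x) t = Transposition.transpose (padd u t) (padd v t) (padd x t)"
  by (simp add: transpose_def padd_inj)

lemma block_ach:
  assumes "fst t + 2 < n" "snd t + 2 < n"
    and w1: "\<forall>(c,d)\<in>set w. fst c \<le> 1 \<and> snd c \<le> 1"
    and w2: "\<forall>i<3. \<forall>j<3. applyW w (i,j) = Transposition.transpose u v (i,j)"
    and u: "fst u < 3" "snd u < 3" and v: "fst v < 3" "snd v < 3"
  shows "achievable n (Transposition.transpose (padd u t) (padd v t))"
proof -
  have eq: "applyW (shiftW t w) = Transposition.transpose (padd u t) (padd v t)"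
  proof
    fix z
    show "applyW (shiftW t w) z = Transposition.transpose (padd u t) (padd v t) z"
    proof (cases "\<exists>i<3. \<exists>j<3. z = padd (i,j) t")
      case True
      then obtain i j where ij: "i<3" "j<3" "z = padd (i,j) t" by blast
      have "applyW (shiftW t w) z = padd (applyW w (i,j)) t"
        unfolding ij(3) by (rule applyW_shift)
      also have "applyW w (i,j) = Transposition.transpose u v (i,j)"
        using w2 ij(1,2) by blast
      also have "padd (Transposition.transpose u v (i,j)) t = Transposition.transpose (padd u t) (padd v t) z"
        unfolding ij(3) by (rule transpose_padd)
      finally show ?thesis .
    next
      case False
      have "\<forall>(c,d)\<in>set (shiftW t w). z \<notin> sq c"
      proof (clarify)
        fix c d assume cd: "(c,d) \<in> set (shiftW t w)" "z \<in> sq c"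
        then obtain c0 where c0: "(c0,d) \<in> set w" "c = padd c0 t" by (auto simp: shiftW_def)
        obtain a b where ab: "c0 = (a,b)" by (cases c0)
        have "a \<le> 1" "b \<le> 1" using w1 c0(1) ab by auto
        from sq_in_block[OF this] cd(2) c0(2) ab False show False by blast
      qed
      then have "applyW (shiftW t w) z = z" by (rule applyW_fix)
      moreover have "z \<noteq> padd u t"
      proof
        assume "z = padd u t"
        moreover have "\<exists>i<3. \<exists>j<3. padd u t = padd (i,j) t" using u by (rule in_blk)
        ultimately show False using False by blast
      qed
      moreover have "z \<noteq> padd v t"
      proof
        assume "z = padd v t"
        moreover have "\<exists>i<3. \<exists>j<3. padd v t = padd (i,j) t" using v by (rule in_blk)
        ultimately show False using False by blast
      qed
      ultimately show ?thesis by simp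
    qed
  qed
  have "\<forall>(c,d)\<in>set (shiftW t w). fst c + 1 < n \<and> snd c + 1 < n"
  proof clarify
    fix c d assume "(c,d) \<in> set (shiftW t w)"
    then obtain c0 where c0: "(c0,d) \<in> set w" "c = padd c0 t" by (auto simp: shiftW_def)
    obtain a b where ab: "c0 = (a,b)" by (cases c0)
    obtain x y where t: "t = (x,y)" by (cases t)
    have "a \<le> 1" "b \<le> 1" using w1 c0(1) ab by auto
    then show "fst c + 1 < n \<and> snd c + 1 < n" using assms(1,2) c0(2) ab t by simp
  qed
  from achievable_applyW[OF this] show ?thesis unfolding eq .
qed
lemma all3: "(\<forall>i<(3::nat). P i) \<longleftrightarrow> P 0 \<and> P 1 \<and> P 2"
  by (auto simp: numeral_3_eq_3 numeral_2_eq_2 less_Suc_eq)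

definition goodW :: "nat \<times> nat \<Rightarrow> nat \<times> nat \<Rightarrow> bool" where
  "goodW u v \<longleftrightarrow> (\<exists>w. (\<forall>(c,d)\<in>set w. fst c \<le> 1 \<and> snd c \<le> 1) \<and>
     (\<forall>i<3. \<forall>j<3. applyW w (i,j) = Transposition.transpose u v (i,j)))"

lemma goodW_0010: "goodW (0,0) (1,0)"
  unfolding goodW_def all3
  by (rule exI[where x="[((0,1),False), ((1,0),True), ((0,1),True), ((1,0),False), ((0,0),False)] :: ((nat \<times> nat) \<times> bool) list"]) (simp add: transpose_def)

lemma goodW_0001: "goodW (0,0) (0,1)"
  unfolding goodW_def all3
  by (rule exI[where x="[((1,0),True), ((0,1),False), ((1,0),False), ((0,1),True), ((0,0),True)] :: ((nat \<times> nat) \<times> bool) list"]) (simp add: transpose_def)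

lemma goodW_0111: "goodW (0,1) (1,1)"
  unfolding goodW_def all3
  by (rule exI[where x="[((0,0),False), ((1,0),True), ((0,1),False), ((1,0),False), ((0,1),True), ((0,0),True), ((0,0),True)] :: ((nat \<times> nat) \<times> bool) list"]) (simp add: transpose_def)

lemma goodW_0102: "goodW (0,1) (0,2)"
  unfolding goodW_def all3
  by (rule exI[where x="[((1,1),True), ((0,1),True), ((0,0),True), ((1,1),False), ((0,0),False)] :: ((nat \<times> nat) \<times> bool) list"]) (simp add: transpose_def)

lemma goodW_0212: "goodW (0,2) (1,2)"
  unfolding goodW_def all3
  by (rule exI[where x="[((1,1),False), ((0,0),False), ((1,1),True), ((0,1),True), ((0,0),True)] :: ((nat \<times> nat) \<times> bool) list"]) (simp add: transpose_def)

lemma goodW_1020: "goodW (1,0) (2,0)"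
  unfolding goodW_def all3
  by (rule exI[where x="[((1,1),False), ((1,0),False), ((0,0),False), ((1,1),True), ((0,0),True)] :: ((nat \<times> nat) \<times> bool) list"]) (simp add: transpose_def)

lemma goodW_1011: "goodW (1,0) (1,1)"
  unfolding goodW_def all3
  by (rule exI[where x="[((0,0),True), ((0,1),False), ((1,0),True), ((0,1),True), ((1,0),False), ((0,0),True), ((0,0),True)] :: ((nat \<times> nat) \<times> bool) list"]) (simp add: transpose_def)

lemma goodW_1121: "goodW (1,1) (2,1)"
  unfolding goodW_def all3
  by (rule exI[where x="[((1,1),False), ((0,1),False), ((1,1),False), ((0,1),True), ((0,0),True), ((1,1),True), ((0,0),False)] :: ((nat \<times> nat) \<times> bool) list"]) (simp add: transpose_def)

lemma goodW_1112: "goodW (1,1) (1,2)"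
  unfolding goodW_def all3
  by (rule exI[where x="[((1,1),True), ((1,0),True), ((1,1),True), ((1,0),False), ((0,0),False), ((1,1),False), ((0,0),True)] :: ((nat \<times> nat) \<times> bool) list"]) (simp add: transpose_def)

lemma goodW_1222: "goodW (1,2) (2,2)"
  unfolding goodW_def all3
  by (rule exI[where x="[((1,0),True), ((1,1),True), ((0,1),True), ((1,0),False), ((0,1),False)] :: ((nat \<times> nat) \<times> bool) list"]) (simp add: transpose_def)

lemma goodW_2021: "goodW (2,0) (2,1)"
  unfolding goodW_def all3
  by (rule exI[where x="[((1,0),True), ((1,1),True), ((0,0),False), ((1,1),False), ((0,0),True)] :: ((nat \<times> nat) \<times> bool) list"]) (simp add: transpose_def)

lemma goodW_2122: "goodW (2,1) (2,2)"
  unfolding goodW_def all3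
  by (rule exI[where x="[((1,0),False), ((0,1),False), ((1,0),True), ((1,1),True), ((0,1),True)] :: ((nat \<times> nat) \<times> bool) list"]) (simp add: transpose_def)

lemma words_right: "a < 2 \<Longrightarrow> b < 3 \<Longrightarrow> goodW (a,b) (a+1,b)"
  using goodW_0010 goodW_0111 goodW_0212 goodW_1020 goodW_1121 goodW_1222
  by (auto simp: numeral_3_eq_3 numeral_2_eq_2 less_Suc_eq)

lemma words_up: "a < 3 \<Longrightarrow> b < 2 \<Longrightarrow> goodW (a,b) (a,b+1)"
  using goodW_0001 goodW_0102 goodW_1011 goodW_1112 goodW_2021 goodW_2122
  by (auto simp: numeral_3_eq_3 numeral_2_eq_2 less_Suc_eq)
lemma trans_right:
  assumes "3 \<le> n" "i + 1 < n" "j < n"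
  shows "achievable n (Transposition.transpose (i,j) (i+1,j))"
proof -
  define x where "x = min i (n-3)"
  define y where "y = min j (n-3)"
  have a: "i - x < 2" "j - y < 3" "x + 2 < n" "y + 2 < n" "x \<le> i" "y \<le> j"
    using assms by (auto simp: x_def y_def)
  from words_right[OF a(1,2)] obtain w where
    w1: "\<forall>(c,d)\<in>set w. fst c \<le> 1 \<and> snd c \<le> 1" and
    w2: "\<forall>i'<3. \<forall>j'<3. applyW w (i',j') = Transposition.transpose (i-x,j-y) (i-x+1,j-y) (i',j')"
    unfolding goodW_def by blast
  have "achievable n (Transposition.transpose (padd (i-x,j-y) (x,y)) (padd (i-x+1,j-y) (x,y)))"
    by (rule block_ach[OF _ _ w1 w2]) (use a in auto)
  moreover have "padd (i-x,j-y) (x,y) = (i,j)" "padd (i-x+1,j-y) (x,y) = (i+1,j)"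
    using a by auto
  ultimately show ?thesis by simp
qed

lemma trans_up:
  assumes "3 \<le> n" "i < n" "j + 1 < n"
  shows "achievable n (Transposition.transpose (i,j) (i,j+1))"
proof -
  define x where "x = min i (n-3)"
  define y where "y = min j (n-3)"
  have a: "i - x < 3" "j - y < 2" "x + 2 < n" "y + 2 < n" "x \<le> i" "y \<le> j"
    using assms by (auto simp: x_def y_def)
  from words_up[OF a(1,2)] obtain w where
    w1: "\<forall>(c,d)\<in>set w. fst c \<le> 1 \<and> snd c \<le> 1" and
    w2: "\<forall>i'<3. \<forall>j'<3. applyW w (i',j') = Transposition.transpose (i-x,j-y) (i-x,j-y+1) (i',j')"
    unfolding goodW_def by blast
  have "achievable n (Transposition.transpose (padd (i-x,j-y) (x,y)) (padd (i-x,j-y+1) (x,y)))"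
    by (rule block_ach[OF _ _ w1 w2]) (use a in auto)
  moreover have "padd (i-x,j-y) (x,y) = (i,j)" "padd (i-x,j-y+1) (x,y) = (i,j+1)"
    using a by auto
  ultimately show ?thesis by simp
qed

lemma trans_conj:
  assumes "achievable n (Transposition.transpose z w)" "achievable n (Transposition.transpose w w')"
    and "w' \<noteq> z"
  shows "achievable n (Transposition.transpose z w')"
proof (cases "w = z")
  case True then show ?thesis using assms(2) by simp
next
  case False
  have "Transposition.transpose z w' =
    Transposition.transpose w w' \<circ> Transposition.transpose z w \<circ> Transposition.transpose w w'"
  proof (cases "w = w'")
    case True then show ?thesis using False by (auto simp: fun_eq_iff transpose_def)
  next
    case False2: False
    show ?thesis using False False2 assms(3) by (auto simp: fun_eq_iff transpose_def)
  qed
  then show ?thesis using assms achievable_comp by metis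
qed

lemma trans_origin:
  assumes "3 \<le> n" "i < n" "j < n"
  shows "achievable n (Transposition.transpose (0,0) (i,j))"
proof -
  have row: "achievable n (Transposition.transpose (0,0) (i,0))" if "i < n" for i
    using that
  proof (induction i)
    case 0 then show ?case using ach_id[of n] by (simp add: id_def)
  next
    case (Suc i)
    then show ?case
      using trans_conj[OF Suc.IH trans_right[of n i 0]] assms(1) by simp
  qed
  show ?thesis using assms(3)
  proof (induction j)
    case 0 then show ?case using row assms(2) by simp
  next
    case (Suc j)
    then show ?case
      using trans_conj[OF Suc.IH trans_up[of n i j]] assms(1,2) by simp
  qed
qed

lemma trans_any:
  assumes "3 \<le> n" "a \<in> grid_V n" "b \<in> grid_V n"
  shows "achievable n (Transposition.transpose a b)"
proof -
  have ta: "achievable n (Transposition.transpose (0,0) a)" and tb: "achievable n (Transposition.transpose (0,0) b)"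
    using assms trans_origin by (cases a; cases b; auto simp: grid_V_def)+
  show ?thesis
  proof (cases "a = (0,0) \<or> b = (0,0) \<or> a = b")
    case True
    then show ?thesis using ta tb
      using ach_id[of n] by (auto simp: transpose_commute id_def)
  next
    case False
    then have "Transposition.transpose a b =
      Transposition.transpose (0,0) a \<circ> Transposition.transpose (0,0) b \<circ> Transposition.transpose (0,0) a"
      by (auto simp: fun_eq_iff transpose_def)
    then show ?thesis using ta tb achievable_comp by metis
  qed
qed

lemma perm_ach:
  assumes "3 \<le> n" "f permutes grid_V n"
  shows "achievable n f"
proof -
  have "finite (grid_V n)" by (simp add: grid_V_def)
  from assms(2) this show ?thesis
  proof (induction rule: permutes_induct)
    case id then show ?case by (rule ach_id)
  next
    case (swap a b p)
    then show ?case using achievable_comp trans_any assms(1) by blast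
  qed
qed
fun seqc :: "(nat \<Rightarrow> (nat \<times> nat \<Rightarrow> nat \<times> nat)) \<Rightarrow> nat \<Rightarrow> (nat \<times> nat \<Rightarrow> nat \<times> nat)" where
  "seqc s 0 = id"
| "seqc s (Suc k) = s k \<circ> seqc s k"

lemma seqc_eq: "(\<forall>k<m. s k = s' k) \<Longrightarrow> k \<le> m \<Longrightarrow> seqc s k = seqc s' k"
  by (induction k) auto

lemma seqc_after: "(\<forall>k\<ge>m. s k = id) \<Longrightarrow> seqc s (m + j) = seqc s m"
  by (induction j) auto

lemma seqc_inj: "(\<forall>k. valid n (s k)) \<Longrightarrow> inj (seqc s k)"
  by (induction k) (auto simp: valid_def inj_compose)

lemma valid_id: "valid n id"
  by (simp add: valid_def)

lemma ach_seq:
  "achievable n \<pi> \<Longrightarrow> \<exists>s m. (\<forall>k. valid n (s k)) \<and> (\<forall>k\<ge>m. s k = id) \<and> seqc s m = \<pi>"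
proof (induction rule: achievable.induct)
  case ach_id
  show ?case by (rule exI[of _ "\<lambda>_. id"], rule exI[of _ 0]) (use valid_id[of n] in \<open>auto simp: id_def\<close>)
next
  case (ach_step \<sigma> \<pi>)
  then obtain s m where s: "\<forall>k. valid n (s k)" "\<forall>k\<ge>m. s k = id" "seqc s m = \<pi>" by blast
  define s' where "s' = s(m := \<sigma>)"
  have "seqc s' m = seqc s m" by (rule seqc_eq[where m=m]) (auto simp: s'_def)
  then have "seqc s' (Suc m) = \<sigma> \<circ> \<pi>" using s(3) by (simp add: s'_def)
  moreover have "\<forall>k. valid n (s' k)" using s(1) ach_step(1) by (simp add: s'_def)
  moreover have "\<forall>k\<ge>Suc m. s' k = id" using s(2) by (simp add: s'_def)
  ultimately show ?case by blast
qed

theorem corollary1: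
  fixes n :: nat and R :: "'r set" and xI xG :: "'r \<Rightarrow> nat \<times> nat"
  assumes "n \<ge> 3"
    and "finite R" and "card R = n ^ 2"
    and "bij_betw xI R (grid_V n)" and "bij_betw xG R (grid_V n)"
  shows "\<exists>p :: 'r \<Rightarrow> nat \<Rightarrow> nat \<times> nat.
           (\<forall>r\<in>R. feasible_path (grid_E n) (xI r) (xG r) (p r)) \<and>
           (\<forall>r\<in>R. \<forall>r'\<in>R. r \<noteq> r' \<longrightarrow> \<not> collide (p r) (p r'))"
proof -
  define \<pi> where "\<pi> v = (if v \<in> grid_V n then xG (inv_into R xI v) else v)" for v
  have "bij_betw (xG \<circ> inv_into R xI) (grid_V n) (grid_V n)"
    by (rule bij_betw_trans[OF bij_betw_inv_into[OF assms(4)] assms(5)])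
  then have "bij_betw \<pi> (grid_V n) (grid_V n)"
    by (rule bij_betw_cong[THEN iffD1, rotated]) (simp add: \<pi>_def)
  then have "\<pi> permutes grid_V n"
    by (rule bij_imp_permutes) (simp add: \<pi>_def)
  then have "achievable n \<pi>" using assms(1) by (rule perm_ach[rotated])
  then obtain s m where s: "\<forall>k. valid n (s k)" "\<forall>k\<ge>m. s k = id" "seqc s m = \<pi>"
    using ach_seq by blast
  have inj: "inj_on xI R" using assms(4) by (simp add: bij_betw_def)
  have piI: "\<pi> (xI r) = xG r" if "r \<in> R" for r
  proof -
    have "xI r \<in> grid_V n" using assms(4) that by (rule bij_betw_apply)
    then show ?thesis using that inj by (simp add: \<pi>_def inv_into_f_f)
  qed
  define p where "p r k = seqc s k (xI r)" for r k
  have feas: "feasible_path (grid_E n) (xI r) (xG r) (p r)" if "r \<in> R" for r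
    unfolding feasible_path_def
  proof (intro conjI exI[of _ m] allI impI)
    show "p r 0 = xI r" by (simp add: p_def)
  next
    fix k assume "m \<le> k"
    then have "seqc s k = seqc s m" using seqc_after[OF s(2), of "k - m"] by simp
    then show "p r k = xG r" using piI[OF that] s(3) by (simp add: p_def)
  next
    fix k
    have "p r (Suc k) = s k (p r k)" by (simp add: p_def)
    then show "(p r k, p r (Suc k)) \<in> grid_E n \<or> p r k = p r (Suc k)"
      using s(1) unfolding valid_def by metis
  qed
  have nocol: "\<not> collide (p r) (p r')" if "r \<in> R" "r' \<in> R" "r \<noteq> r'" for r r'
  proof
    assume "collide (p r) (p r')"
    then obtain k where k: "p r k = p r' k \<or> (p r k, p r (Suc k)) = (p r' (Suc k), p r' k)"
      by (auto simp: collide_def)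
    have ne: "xI r \<noteq> xI r'" using inj that by (auto simp: inj_on_def)
    have ne2: "p r k \<noteq> p r' k" using seqc_inj[OF s(1), of k] ne unfolding p_def by (metis injD)
    have suc: "p q (Suc k) = s k (p q k)" for q by (simp add: p_def)
    from k ne2 have "p r k = s k (p r' k)" "s k (p r k) = p r' k" by (auto simp: suc)
    then show False using s(1) ne2 unfolding valid_def by metis
  qed
  show ?thesis using feas nocol by blast
qed

end
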